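(* Let $N=\{1,\dots,n\}$ be any set of agents and $M$ a set of $m$ chores with $m\le n+2$, where each agent $i$ has a normalized monotone cost function $c_i:2^M\to\mathbb{R}_{\ge0}$. Then an EFX allocation exists.
   Context: A cost function $c_i$ is normalized if $c_i(\emptyset)=0$ and monotone if $c_i(S\cup\{e\})\ge c_i(S)$ for all $S\subseteq M$, $e\in M$. An allocation is a partition $X=(X_1,\dots,X_n)$ of $M$ into $n$ (possibly empty) bundles, agent $i$ receiving $X_i$. $X$ is EFX if for all agents $i,j$ and every chore $e\in X_i$, $c_i(X_i\setminus\{e\})\le c_i(X_j)$. *)

theory Defs
  imports Complex_Main
begin

definition normalized_cost :: "'b set \<Rightarrow> ('b set \<Rightarrow> real) \<Rightarrow> bool" where
  "normalized_cost M c \<longleftrightarrow> c {} = 0"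

definition monotone_cost :: "'b set \<Rightarrow> ('b set \<Rightarrow> real) \<Rightarrow> bool" where
  "monotone_cost M c \<longleftrightarrow> (\<forall>S e. S \<subseteq> M \<longrightarrow> e \<in> M \<longrightarrow> c (S \<union> {e}) \<ge> c S)"

definition nonneg_cost :: "'b set \<Rightarrow> ('b set \<Rightarrow> real) \<Rightarrow> bool" where
  "nonneg_cost M c \<longleftrightarrow> (\<forall>S. S \<subseteq> M \<longrightarrow> c S \<ge> 0)"

definition is_allocation :: "nat set \<Rightarrow> 'b set \<Rightarrow> (nat \<Rightarrow> 'b set) \<Rightarrow> bool" where
  "is_allocation N M X \<longleftrightarrow>
     (\<forall>i\<in>N. X i \<subseteq> M) \<and> (\<Union>i\<in>N. X i) = M \<and>
     (\<forall>i\<in>N. \<forall>j\<in>N. i \<noteq> j \<longrightarrow> X i \<inter> X j = {})"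

definition EFX :: "nat set \<Rightarrow> (nat \<Rightarrow> 'b set \<Rightarrow> real) \<Rightarrow> (nat \<Rightarrow> 'b set) \<Rightarrow> bool" where
  "EFX N c X \<longleftrightarrow> (\<forall>i\<in>N. \<forall>j\<in>N. \<forall>e\<in>X i. c i (X i - {e}) \<le> c i (X j))"

end

theory Submission
  imports Defs
begin

definition below :: "('b set \<Rightarrow> real) \<Rightarrow> 'b set \<Rightarrow> 'b set \<Rightarrow> bool" where
  "below f T M \<longleftrightarrow> (\<forall>x\<in>T. \<forall>y\<in>M - T. f {x} \<le> f {y})"

lemma mono_diff:
  assumes "monotone_cost M f" "S \<subseteq> M" "e \<in> S"
  shows "f (S - {e}) \<le> f S"
proof -
  have "f ((S - {e}) \<union> {e}) \<ge> f (S - {e})" using assms unfolding monotone_cost_def by blast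
  moreover have "(S - {e}) \<union> {e} = S" using assms(3) by blast
  ultimately show ?thesis by simp
qed

lemma mono2:
  assumes "monotone_cost M f" "x \<in> M" "y \<in> M"
  shows "f {x} \<le> f {x, y}" "f {y} \<le> f {x, y}"
proof -
  have "f ({x} \<union> {y}) \<ge> f {x}" using assms unfolding monotone_cost_def by blast
  thus "f {x} \<le> f {x, y}" by (metis insert_commute insert_is_Un)
  have "f ({y} \<union> {x}) \<ge> f {y}" using assms unfolding monotone_cost_def by blast
  thus "f {y} \<le> f {x, y}" by (simp add: insert_commute)
qed

lemma below_take:
  assumes "distinct L" "sorted (map (\<lambda>x. f {x}) L)" "set L = M" "p \<le> length L"
  shows "below f (set (take p L)) M"
  unfolding below_def
proof (intro ballI)
  fix x y assume x: "x \<in> set (take p L)" and y: "y \<in> M - set (take p L)"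
  obtain i where i: "i < p" "i < length L" "x = L ! i" using x assms(4)
    by (auto simp: in_set_conv_nth)
  obtain j where j: "j < length L" "y = L ! j" using y assms(3) by (auto simp: in_set_conv_nth)
  have "\<not> j < p" using y j assms(4) by (auto simp: in_set_conv_nth)
  hence "i \<le> j" using i by simp
  hence "(map (\<lambda>x. f {x}) L) ! i \<le> (map (\<lambda>x. f {x}) L) ! j"
    using sorted_nth_mono[OF assms(2)] j by simp
  thus "f {x} \<le> f {y}" using i j by simp
qed

lemma sorted_list:
  assumes "finite M"
  shows "\<exists>L. distinct L \<and> set L = M \<and> length L = card M \<and> sorted (map (\<lambda>x. f {x}) L)"
proof -
  obtain xs where xs: "distinct xs" "set xs = M" using finite_distinct_list[OF assms] by blast
  let ?L = "sort_key (\<lambda>x. f {x}) xs"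
  have "distinct ?L" "set ?L = M" "sorted (map (\<lambda>x. f {x}) ?L)" using xs by auto
  moreover have "length ?L = card M" using xs distinct_card by fastforce
  ultimately show ?thesis by blast
qed

lemma chain4:
  assumes "finite M" "4 \<le> card M"
  shows "\<exists>a0 a1 a2 a3. distinct [a0,a1,a2,a3] \<and> {a0,a1,a2,a3} \<subseteq> M \<and> below f {a0,a1} M
     \<and> below f {a0,a1,a2} M \<and> below f {a0,a1,a2,a3} M"
proof -
  obtain L where L: "distinct L" "set L = M" "length L = card M" "sorted (map (\<lambda>x. f {x}) L)"
    using sorted_list[OF assms(1)] by blast
  have "Suc (Suc (Suc (Suc 0))) \<le> length L" using L(3) assms(2) by simp
  hence "\<exists>a0 a1 a2 a3 rest. L = a0#a1#a2#a3#rest" by (auto simp: Suc_le_length_iff)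
  then obtain a0 a1 a2 a3 rest where LL: "L = a0#a1#a2#a3#rest" by blast
  have b2: "below f (set (take 2 L)) M" and b3: "below f (set (take 3 L)) M"
    and b4: "below f (set (take 4 L)) M"
    using below_take[OF L(1) L(4) L(2)] L(3) assms(2) by auto
  show ?thesis
    apply (rule exI[of _ a0], rule exI[of _ a1], rule exI[of _ a2], rule exI[of _ a3])
    using b2 b3 b4 L(1,2) unfolding LL by (auto simp: numeral_eq_Suc insert_commute)
qed

lemma chain2:
  assumes "finite M" "2 \<le> card M"
  shows "\<exists>a0 a1. a0 \<noteq> a1 \<and> {a0,a1} \<subseteq> M \<and> below f {a0,a1} M"
proof -
  obtain L where L: "distinct L" "set L = M" "length L = card M" "sorted (map (\<lambda>x. f {x}) L)"
    using sorted_list[OF assms(1)] by blast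
  have "Suc (Suc 0) \<le> length L" using L(3) assms(2) by simp
  hence "\<exists>a0 a1 rest. L = a0#a1#rest" by (auto simp: Suc_le_length_iff)
  then obtain a0 a1 rest where LL: "L = a0#a1#rest" by blast
  have b2: "below f (set (take 2 L)) M"
    using below_take[OF L(1) L(4) L(2)] L(3) assms(2) by auto
  show ?thesis
    apply (rule exI[of _ a0], rule exI[of _ a1])
    using b2 L(1,2) unfolding LL by (auto simp: numeral_eq_Suc)
qed


lemma assemble:
  fixes N :: "nat set" and M :: "'b set"
  assumes finM: "finite M" and finN: "finite N" and KN: "K \<subseteq> N"
    and YM: "\<forall>k\<in>K. Y k \<subseteq> M"
    and disj: "\<forall>k\<in>K. \<forall>l\<in>K. k \<noteq> l \<longrightarrow> Y k \<inter> Y l = {}"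
    and cardR: "card (M - (\<Union>k\<in>K. Y k)) = card (N - K)"
    and costs: "\<forall>i\<in>N. normalized_cost M (c i) \<and> monotone_cost M (c i) \<and> nonneg_cost M (c i)"
    and condK: "\<forall>k\<in>K. \<forall>e\<in>Y k. \<forall>l\<in>K. l \<noteq> k \<longrightarrow> c k (Y k - {e}) \<le> c k (Y l)"
    and condR: "\<forall>k\<in>K. \<forall>e\<in>Y k. \<forall>r\<in>M - (\<Union>k\<in>K. Y k). c k (Y k - {e}) \<le> c k {r}"
  shows "\<exists>X. is_allocation N M X \<and> EFX N c X"
proof -
  define R where "R = M - (\<Union>k\<in>K. Y k)"
  have "finite R" using finM R_def by simp
  then obtain h where h: "bij_betw h (N - K) R"
    using finite_same_card_bij[of "N-K" R] cardR finN R_def by auto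
  define X where "X k = (if k \<in> K then Y k else {h k})" for k
  have hR: "h k \<in> R" if "k \<in> N - K" for k using h that bij_betwE by blast
  have XM: "X k \<subseteq> M" if "k \<in> N" for k
    using that YM hR R_def by (auto simp: X_def)
  have alloc: "is_allocation N M X"
    unfolding is_allocation_def
  proof (intro conjI ballI impI)
    show "X i \<subseteq> M" if "i \<in> N" for i using XM that .
    show "(\<Union>i\<in>N. X i) = M"
    proof
      show "(\<Union>i\<in>N. X i) \<subseteq> M" using XM by blast
      show "M \<subseteq> (\<Union>i\<in>N. X i)"
      proof
        fix x assume x: "x \<in> M"
        show "x \<in> (\<Union>i\<in>N. X i)"
        proof (cases "x \<in> R")
          case True
          then obtain k where "k \<in> N - K" "h k = x" using h by (metis bij_betw_def imageE)
          thus ?thesis by (auto simp: X_def)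
        next
          case False
          then obtain k where "k \<in> K" "x \<in> Y k" using x R_def by auto
          thus ?thesis using KN by (auto simp: X_def)
        qed
      qed
    qed
    fix i j assume ij: "i \<in> N" "j \<in> N" "i \<noteq> j"
    show "X i \<inter> X j = {}"
    proof (cases "i \<in> K"; cases "j \<in> K")
      assume "i \<in> K" "j \<in> K" thus ?thesis using disj ij by (auto simp: X_def)
    next
      assume "i \<in> K" "j \<notin> K" thus ?thesis using hR[of j] ij R_def by (auto simp: X_def)
    next
      assume "i \<notin> K" "j \<in> K" thus ?thesis using hR[of i] ij R_def by (auto simp: X_def)
    next
      assume "i \<notin> K" "j \<notin> K"
      hence "h i \<noteq> h j" using h ij unfolding bij_betw_def inj_on_def by blast
      thus ?thesis using \<open>i \<notin> K\<close> \<open>j \<notin> K\<close> by (auto simp: X_def)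
    qed
  qed
  have "EFX N c X"
    unfolding EFX_def
  proof (intro ballI)
    fix i j e assume i: "i \<in> N" and j: "j \<in> N" and e: "e \<in> X i"
    show "c i (X i - {e}) \<le> c i (X j)"
    proof (cases "i \<in> K")
      case False
      hence "X i - {e} = {}" using e by (auto simp: X_def)
      moreover have "c i {} = 0" using costs i by (simp add: normalized_cost_def)
      moreover have "c i (X j) \<ge> 0" using costs i XM[OF j] by (simp add: nonneg_cost_def)
      ultimately show ?thesis by (metis order_refl)
    next
      case iK: True
      show ?thesis
      proof (cases "j = i")
        case True
        thus ?thesis using mono_diff[of M "c i" "X i" e] costs i XM[OF i] e by simp
      next
        case False
        show ?thesis
        proof (cases "j \<in> K")
          case True
          thus ?thesis using condK iK e False by (auto simp: X_def)
        next
          case jK: False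
          have "h j \<in> R" using hR j jK by simp
          thus ?thesis using condR iK e jK R_def by (auto simp: X_def)
        qed
      qed
    qed
  qed
  with alloc show ?thesis by blast
qed


lemma single:
  assumes finM: "finite M" and i: "i \<in> {1..n}" and AM: "A \<subseteq> M"
    and card: "card (M - A) = n - 1"
    and costs: "\<forall>i\<in>{1..n}. normalized_cost M (c i) \<and> monotone_cost M (c i) \<and> nonneg_cost M (c i)"
    and cond: "\<forall>e\<in>A. \<forall>r\<in>M - A. c i (A - {e}) \<le> c i {r}"
  shows "\<exists>X. is_allocation {1..n} M X \<and> EFX {1..n} c X"
proof (rule assemble[where K="{i}" and Y="\<lambda>_. A"])
  show "card (M - (\<Union>k\<in>{i}. A)) = card ({1..n} - {i})" using card i by simp
qed (use assms in auto)

lemma PP: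
  assumes finM: "finite M" and card: "card M = n + 2"
    and ij: "i \<in> {1..n}" "j \<in> {1..n}" "i \<noteq> j"
    and costs: "\<forall>i\<in>{1..n}. normalized_cost M (c i) \<and> monotone_cost M (c i) \<and> nonneg_cost M (c i)"
    and dist: "distinct [a1,a2,b1,b2]" and sub: "{a1,a2,b1,b2} \<subseteq> M"
    and hi: "\<forall>x\<in>{a1,a2}. c i {x} \<le> c i {b1,b2} \<and> (\<forall>r\<in>M - {a1,a2,b1,b2}. c i {x} \<le> c i {r})"
    and hj: "\<forall>x\<in>{b1,b2}. c j {x} \<le> c j {a1,a2} \<and> (\<forall>r\<in>M - {a1,a2,b1,b2}. c j {x} \<le> c j {r})"
  shows "\<exists>X. is_allocation {1..n} M X \<and> EFX {1..n} c X"
proof -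
  define Y where "Y k = (if k = i then {a1,a2} else {b1,b2})" for k
  have U: "(\<Union>k\<in>{i,j}. Y k) = {a1,a2,b1,b2}" using ij(3) by (auto simp: Y_def)
  have c4: "card {a1,a2,b1,b2} = 4" using dist by simp
  have c2: "card {i,j} = 2" using ij(3) by simp
  show ?thesis
  proof (rule assemble[where K="{i,j}" and Y=Y])
    show "card (M - (\<Union>k\<in>{i,j}. Y k)) = card ({1..n} - {i,j})"
      unfolding U using card c4 c2 sub ij by (simp add: card_Diff_subset)
    show "\<forall>k\<in>{i,j}. \<forall>l\<in>{i,j}. k \<noteq> l \<longrightarrow> Y k \<inter> Y l = {}"
      using dist by (auto simp: Y_def)
    show "\<forall>k\<in>{i,j}. \<forall>e\<in>Y k. \<forall>l\<in>{i,j}. l \<noteq> k \<longrightarrow> c k (Y k - {e}) \<le> c k (Y l)"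
      using hi hj dist ij(3) by (auto simp: Y_def insert_Diff_if)
    show "\<forall>k\<in>{i,j}. \<forall>e\<in>Y k. \<forall>r\<in>M - (\<Union>k\<in>{i,j}. Y k). c k (Y k - {e}) \<le> c k {r}"
      unfolding U using hi hj dist ij(3) by (auto simp: Y_def insert_Diff_if)
  qed (use assms in \<open>auto simp: Y_def\<close>)
qed


lemma L3p:
  assumes finM: "finite M" and card: "card M = n + 2"
    and ij: "i \<in> {1..n}" "j \<in> {1..n}" "i \<noteq> j"
    and costs: "\<forall>i\<in>{1..n}. normalized_cost M (c i) \<and> monotone_cost M (c i) \<and> nonneg_cost M (c i)"
    and dist: "distinct [e,p,q,a3]" and sub: "{e,p,q,a3} \<subseteq> M" and W: "W = {e,p,q}"
    and Bi3: "below (c i) W M" and Bi4: "below (c i) (insert a3 W) M" and Bj3: "below (c j) W M"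
    and gt: "c i {a3} < c i {p,q}"
  shows "\<exists>X. is_allocation {1..n} M X \<and> EFX {1..n} c X"
proof (rule PP[OF finM card ij costs, of e a3 p q])
  show "distinct [e, a3, p, q]" using dist by auto
  show "{e, a3, p, q} \<subseteq> M" using sub by auto
  have mi: "monotone_cost M (c i)" and mj: "monotone_cost M (c j)" using costs ij by auto
  have ea3: "c i {e} \<le> c i {a3}" using Bi3 dist sub W unfolding below_def by auto
  show "\<forall>x\<in>{e, a3}. c i {x} \<le> c i {p, q} \<and> (\<forall>r\<in>M - {e, a3, p, q}. c i {x} \<le> c i {r})"
    using ea3 gt Bi4 W unfolding below_def by auto
  have "c j {x} \<le> c j {a3}" if "x \<in> {p,q}" for x using Bj3 dist sub W that unfolding below_def by auto
  moreover have "c j {a3} \<le> c j {e, a3}" using mono2(2)[OF mj, of e a3] sub by auto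
  ultimately show "\<forall>x\<in>{p, q}. c j {x} \<le> c j {e, a3} \<and> (\<forall>r\<in>M - {e, a3, p, q}. c j {x} \<le> c j {r})"
    using Bj3 W unfolding below_def by fastforce
qed

lemma L3:
  assumes finM: "finite M" and card: "card M = n + 2"
    and ij: "i \<in> {1..n}" "j \<in> {1..n}" "i \<noteq> j"
    and costs: "\<forall>i\<in>{1..n}. normalized_cost M (c i) \<and> monotone_cost M (c i) \<and> nonneg_cost M (c i)"
    and dist: "distinct [w1,w2,w3,a3]" and sub: "{w1,w2,w3,a3} \<subseteq> M" and W: "W = {w1,w2,w3}"
    and Bi3: "below (c i) W M" and Bi4: "below (c i) (insert a3 W) M" and Bj3: "below (c j) W M"
  shows "\<exists>X. is_allocation {1..n} M X \<and> EFX {1..n} c X"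
proof (cases "\<forall>e\<in>W. \<forall>r\<in>M - W. c i (W - {e}) \<le> c i {r}")
  case True
  have "card W = 3" using W dist by simp
  hence "card (M - W) = n - 1" using card sub W by (simp add: card_Diff_subset)
  thus ?thesis using single[OF finM ij(1), of W] True sub W costs by auto
next
  case False
  then obtain e r where e: "e \<in> W" and r: "r \<in> M - W" and lt: "c i {r} < c i (W - {e})"
    by force
  have "c i {a3} \<le> c i {r}"
  proof (cases "r = a3")
    case False thus ?thesis using Bi4 r unfolding below_def by auto
  qed simp
  with lt have gt: "c i {a3} < c i (W - {e})" by simp
  have d: "w1 \<noteq> w2" "w1 \<noteq> w3" "w2 \<noteq> w3" using dist by auto
  consider "e = w1" | "e = w2" | "e = w3" using e W by auto
  then show ?thesis
  proof cases
    case 1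
    have "W - {e} = {w2,w3}" using 1 W d by auto
    hence g: "c i {a3} < c i {w2,w3}" using gt by simp
    have W': "W = {w1,w2,w3}" using W by auto
    have d': "distinct [w1,w2,w3,a3]" using dist by auto
    have s': "{w1,w2,w3,a3} \<subseteq> M" using sub by auto
    show ?thesis by (rule L3p[OF finM card ij costs d' s' W' Bi3 Bi4 Bj3 g])
  next
    case 2
    have "W - {e} = {w1,w3}" using 2 W d by auto
    hence g: "c i {a3} < c i {w1,w3}" using gt by simp
    have W': "W = {w2,w1,w3}" using W by auto
    have d': "distinct [w2,w1,w3,a3]" using dist by auto
    have s': "{w2,w1,w3,a3} \<subseteq> M" using sub by auto
    show ?thesis by (rule L3p[OF finM card ij costs d' s' W' Bi3 Bi4 Bj3 g])
  next
    case 3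
    have "W - {e} = {w1,w2}" using 3 W d by auto
    hence g: "c i {a3} < c i {w1,w2}" using gt by simp
    have W': "W = {w3,w1,w2}" using W by auto
    have d': "distinct [w3,w1,w2,a3]" using dist by auto
    have s': "{w3,w1,w2,a3} \<subseteq> M" using sub by auto
    show ?thesis by (rule L3p[OF finM card ij costs d' s' W' Bi3 Bi4 Bj3 g])
  qed
qed


lemma caseB1:
  assumes finM: "finite M" and card: "card M = n + 2"
    and ij: "i \<in> {1..n}" "j \<in> {1..n}" "i \<noteq> j"
    and costs: "\<forall>i\<in>{1..n}. normalized_cost M (c i) \<and> monotone_cost M (c i) \<and> nonneg_cost M (c i)"
    and dist: "distinct [u,v1,v2,b2]" and sub: "{u,v1,v2,b2} \<subseteq> M"
    and Bi: "below (c i) {u,v1} M" and Bj: "below (c j) {u,v2,b2} M"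
  shows "\<exists>X. is_allocation {1..n} M X \<and> EFX {1..n} c X"
proof (rule PP[OF finM card ij costs dist sub])
  have mi: "monotone_cost M (c i)" and mj: "monotone_cost M (c j)" using costs ij by auto
  have "c i {x} \<le> c i {v2}" if "x \<in> {u,v1}" for x using Bi dist sub that unfolding below_def by auto
  moreover have "c i {v2} \<le> c i {v2, b2}" using mono2(1)[OF mi, of v2 b2] sub by auto
  ultimately show "\<forall>x\<in>{u, v1}. c i {x} \<le> c i {v2, b2} \<and> (\<forall>r\<in>M - {u, v1, v2, b2}. c i {x} \<le> c i {r})"
    using Bi unfolding below_def by fastforce
  have "c j {x} \<le> c j {v1}" if "x \<in> {v2,b2}" for x using Bj dist sub that unfolding below_def by auto
  moreover have "c j {v1} \<le> c j {u, v1}" using mono2(2)[OF mj, of u v1] sub by auto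
  ultimately show "\<forall>x\<in>{v2, b2}. c j {x} \<le> c j {u, v1} \<and> (\<forall>r\<in>M - {u, v1, v2, b2}. c j {x} \<le> c j {r})"
    using Bj unfolding below_def by fastforce
qed

lemma caseC1:
  assumes finM: "finite M" and card: "card M = n + 2"
    and ij: "i \<in> {1..n}" "j \<in> {1..n}" "i \<noteq> j"
    and costs: "\<forall>i\<in>{1..n}. normalized_cost M (c i) \<and> monotone_cost M (c i) \<and> nonneg_cost M (c i)"
    and dist: "distinct [u,v,a2,b2]" and sub: "{u,v,a2,b2} \<subseteq> M"
    and Bi: "below (c i) {u,v,a2} M" and Bj: "below (c j) {u,v,b2} M"
  shows "\<exists>X. is_allocation {1..n} M X \<and> EFX {1..n} c X"
proof (rule PP[OF finM card ij costs, of u a2 v b2])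
  show "distinct [u, a2, v, b2]" using dist by auto
  show "{u, a2, v, b2} \<subseteq> M" using sub by auto
  have mi: "monotone_cost M (c i)" and mj: "monotone_cost M (c j)" using costs ij by auto
  have "c i {x} \<le> c i {b2}" if "x \<in> {u,a2}" for x using Bi dist sub that unfolding below_def by auto
  moreover have "c i {b2} \<le> c i {v, b2}" using mono2(2)[OF mi, of v b2] sub by auto
  ultimately show "\<forall>x\<in>{u, a2}. c i {x} \<le> c i {v, b2} \<and> (\<forall>r\<in>M - {u, a2, v, b2}. c i {x} \<le> c i {r})"
    using Bi unfolding below_def by fastforce
  have "c j {x} \<le> c j {a2}" if "x \<in> {v,b2}" for x using Bj dist sub that unfolding below_def by auto
  moreover have "c j {a2} \<le> c j {u, a2}" using mono2(2)[OF mj, of u a2] sub by auto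
  ultimately show "\<forall>x\<in>{v, b2}. c j {x} \<le> c j {u, a2} \<and> (\<forall>r\<in>M - {u, a2, v, b2}. c j {x} \<le> c j {r})"
    using Bj unfolding below_def by fastforce
qed

lemma caseA:
  assumes finM: "finite M" and card: "card M = n + 2"
    and ij: "i \<in> {1..n}" "j \<in> {1..n}" "i \<noteq> j"
    and costs: "\<forall>i\<in>{1..n}. normalized_cost M (c i) \<and> monotone_cost M (c i) \<and> nonneg_cost M (c i)"
    and dist: "distinct [a0,a1,b0,b1]" and sub: "{a0,a1,b0,b1} \<subseteq> M"
    and Bi: "below (c i) {a0,a1} M" and Bj: "below (c j) {b0,b1} M"
  shows "\<exists>X. is_allocation {1..n} M X \<and> EFX {1..n} c X"
proof (rule PP[OF finM card ij costs dist sub])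
  have mi: "monotone_cost M (c i)" and mj: "monotone_cost M (c j)" using costs ij by auto
  have "c i {x} \<le> c i {b0}" if "x \<in> {a0,a1}" for x using Bi dist sub that unfolding below_def by auto
  moreover have "c i {b0} \<le> c i {b0, b1}" using mono2(1)[OF mi, of b0 b1] sub by auto
  ultimately show "\<forall>x\<in>{a0, a1}. c i {x} \<le> c i {b0, b1} \<and> (\<forall>r\<in>M - {a0, a1, b0, b1}. c i {x} \<le> c i {r})"
    using Bi unfolding below_def by fastforce
  have "c j {x} \<le> c j {a0}" if "x \<in> {b0,b1}" for x using Bj dist sub that unfolding below_def by auto
  moreover have "c j {a0} \<le> c j {a0, a1}" using mono2(1)[OF mj, of a0 a1] sub by auto
  ultimately show "\<forall>x\<in>{b0, b1}. c j {x} \<le> c j {a0, a1} \<and> (\<forall>r\<in>M - {a0, a1, b0, b1}. c j {x} \<le> c j {r})"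
    using Bj unfolding below_def by fastforce
qed

lemma below_cong: "below f A M \<Longrightarrow> A = B \<Longrightarrow> below f B M" by simp

lemma core:
  assumes finM: "finite M" and card: "card M = n + 2"
    and ij: "i \<in> {1..n}" "j \<in> {1..n}" "i \<noteq> j"
    and costs: "\<forall>i\<in>{1..n}. normalized_cost M (c i) \<and> monotone_cost M (c i) \<and> nonneg_cost M (c i)"
    and di: "distinct [u,v1,a2,a3]" and dj: "distinct [u,v2,b2,b3]"
    and si: "{u,v1,a2,a3} \<subseteq> M" and sj: "{u,v2,b2,b3} \<subseteq> M"
    and Ti2: "below (c i) Si2 M" "Si2 = {u,v1}"
    and Ti3: "below (c i) Si3 M" "Si3 = {u,v1,a2}"
    and Ti4: "below (c i) Si4 M" "Si4 = {u,v1,a2,a3}"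
    and Tj2: "below (c j) Sj2 M" "Sj2 = {u,v2}"
    and Tj3: "below (c j) Sj3 M" "Sj3 = {u,v2,b2}"
  shows "\<exists>X. is_allocation {1..n} M X \<and> EFX {1..n} c X"
proof -
  note Bi2 = Ti2(1)[unfolded Ti2(2)] and Bi3 = Ti3(1)[unfolded Ti3(2)]
    and Bi4 = Ti4(1)[unfolded Ti4(2)] and Bj2 = Tj2(1)[unfolded Tj2(2)]
    and Bj3 = Tj3(1)[unfolded Tj3(2)]
  have Bi4': "below (c i) (insert a3 {u,v1,a2}) M" by (rule below_cong[OF Bi4]) auto
  show ?thesis
  proof (cases "v1 = v2")
    case True
    show ?thesis
    proof (cases "a2 = b2")
      case False
      show ?thesis
        by (rule caseC1[OF finM card ij costs _ _ Bi3, of b2])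
           (use True False di dj si sj Bj3 in auto)
    next
      case ab: True
      show ?thesis
        by (rule L3[OF finM card ij costs di si refl Bi3 Bi4' below_cong[OF Bj3]])
           (use True ab in auto)
    qed
  next
    case vne: False
    show ?thesis
    proof (cases "b2 = v1")
      case False
      show ?thesis
        by (rule caseB1[OF finM card ij costs _ _ Bi2 Bj3]) (use vne False di dj si sj in auto)
    next
      case bv: True
      show ?thesis
      proof (cases "a2 = v2")
        case False
        show ?thesis
          by (rule caseB1[OF finM card ij(2,1) ij(3)[symmetric] costs _ _ Bj2 Bi3])
             (use vne False di dj si sj in auto)
      next
        case av: True
        show ?thesis
          by (rule L3[OF finM card ij costs di si refl Bi3 Bi4' below_cong[OF Bj3]])
             (use bv av in auto)
      qed
    qed
  qed
qed


theorem theorem4: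
  fixes n :: nat and M :: "'b set" and c :: "nat \<Rightarrow> 'b set \<Rightarrow> real"
  assumes "n \<ge> 1"
    and "finite M"
    and "card M \<le> n + 2"
    and "\<forall>i\<in>{1..n}. normalized_cost M (c i) \<and> monotone_cost M (c i) \<and> nonneg_cost M (c i)"
  shows "\<exists>X. is_allocation {1..n} M X \<and> EFX {1..n} c X"
proof -
  note n1 = assms(1) and finM = assms(2) and costs = assms(4)
  have one: "(1::nat) \<in> {1..n}" using n1 by simp
  consider "card M \<le> n" | "card M = n + 1" | "card M = n + 2" "n = 1" | "card M = n + 2" "n \<ge> 2"
    using assms(3) n1 by linarith
  then show ?thesis
  proof cases
    case 1
    obtain h where h: "h ` M \<subseteq> {1..n}" "inj_on h M"
      using card_le_inj[OF finM, of "{1..n}"] 1 by auto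
    define Y where "Y k = {x \<in> M. h x = k}" for k
    have Ysub: "Y k - {e} = {}" if "e \<in> Y k" for k e
      using h(2) that unfolding Y_def inj_on_def by auto
    show ?thesis
    proof (rule assemble[where K="{1..n}" and Y=Y])
      have "(\<Union>k\<in>{1..n}. Y k) = M" using h(1) by (auto simp: Y_def)
      thus "card (M - (\<Union>k\<in>{1..n}. Y k)) = card ({1..n} - {1..n})" by simp
      show "\<forall>k\<in>{1..n}. \<forall>e\<in>Y k. \<forall>l\<in>{1..n}. l \<noteq> k \<longrightarrow> c k (Y k - {e}) \<le> c k (Y l)"
      proof (intro ballI impI)
        fix k e l assume k: "k \<in> {1..n}" and e: "e \<in> Y k" and l: "l \<in> {1..n}"
        have "c k {} = 0" using costs k by (simp add: normalized_cost_def)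
        hence "c k (Y k - {e}) = 0" using Ysub[OF e] by (simp only:)
        moreover have "c k (Y l) \<ge> 0" using costs k by (auto simp: nonneg_cost_def Y_def)
        ultimately show "c k (Y k - {e}) \<le> c k (Y l)" by simp
      qed
    qed (use finM costs h(1) in \<open>auto simp: Y_def\<close>)
  next
    case 2
    obtain a0 a1 where a: "a0 \<noteq> a1" "{a0,a1} \<subseteq> M" "below (c 1) {a0,a1} M"
      using chain2[OF finM, of "c 1"] 2 n1 by auto
    have cd: "card (M - {a0,a1}) = n - 1" using 2 a by (simp add: card_Diff_subset)
    show ?thesis
    proof (rule single[OF finM one a(2) cd costs])
      show "\<forall>e\<in>{a0, a1}. \<forall>r\<in>M - {a0, a1}. c 1 ({a0, a1} - {e}) \<le> c 1 {r}"
        using a unfolding below_def by (auto simp: insert_Diff_if)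
    qed
  next
    case 3
    show ?thesis by (rule single[OF finM one, of M]) (use 3 costs in auto)
  next
    case 4
    have two: "(2::nat) \<in> {1..n}" using 4 by simp
    obtain a0 a1 a2 a3 where A: "distinct [a0,a1,a2,a3]" "{a0,a1,a2,a3} \<subseteq> M"
      "below (c 1) {a0,a1} M" "below (c 1) {a0,a1,a2} M" "below (c 1) {a0,a1,a2,a3} M"
      using chain4[OF finM, of "c 1"] 4 by auto
    obtain b0 b1 b2 b3 where B: "distinct [b0,b1,b2,b3]" "{b0,b1,b2,b3} \<subseteq> M"
      "below (c 2) {b0,b1} M" "below (c 2) {b0,b1,b2} M" "below (c 2) {b0,b1,b2,b3} M"
      using chain4[OF finM, of "c 2"] 4 by auto
    note cr = finM 4(1) one two _ costs
    consider "{a0,a1} \<inter> {b0,b1} = {}" | "a0 = b0" | "a0 = b1" | "a1 = b0" | "a1 = b1" by blast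
    then show ?thesis
    proof cases
      case 1
      show ?thesis by (rule caseA[OF cr _ _ A(3) B(3)]) (use 1 A B in auto)
    next
      case 2
      show ?thesis
        by (rule core[OF cr _ _ _ _ A(3) _ A(4) _ A(5) _ B(3) _ B(4), of a0 a1 a2 a3 b1 b2 b3])
           (use 2 A B in auto)
    next
      case 3
      show ?thesis
        by (rule core[OF cr _ _ _ _ A(3) _ A(4) _ A(5) _ B(3) _ B(4), of a0 a1 a2 a3 b0 b2 b3])
           (use 3 A B in auto)
    next
      case 4
      show ?thesis
        by (rule core[OF cr _ _ _ _ A(3) _ A(4) _ A(5) _ B(3) _ B(4), of a1 a0 a2 a3 b1 b2 b3])
           (use 4 A B in auto)
    next
      case 5
      show ?thesis
        by (rule core[OF cr _ _ _ _ A(3) _ A(4) _ A(5) _ B(3) _ B(4), of a1 a0 a2 a3 b0 b2 b3])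
           (use 5 A B in auto)
    qed
  qed
qed

end
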